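(* For every $n\ge1$, $Z(G_n)=Z(\widehat{G}_n)=t_n+1$.
   Context: Zero forcing: given a graph and a set $S$ of vertices initially colored black (all others white), repeatedly apply the rule: if a black vertex $v$ has exactly one white neighbor $u$, then $u$ becomes black. $S$ is a zero forcing set if eventually every vertex becomes black. $Z(G)$ is the minimum size of a zero forcing set of $G$. Subdivided $K_4$: the complete graph on 4 vertices $a,b,c,e$ with the edge $ab$ subdivided by a new vertex $s$ (5 vertices, edges $as, sb, ac, ae, bc, be, ce$); $s$ is its subdivision vertex. $B_d$ ($d\ge1$) is the complete binary tree with $2^d-1$ vertices and root $r$. $G_n$ ($n\ge1$): take $B_{2n-1}$ with root $r_n$, and for every leaf $\ell$ of $B_{2n-1}$ attach a new copy of the subdivided $K_4$ by identifying $\ell$ with its subdivision vertex. $\widehat{G}_n$ is obtained from $G_n$ by adding a new vertex $y_n$ adjacent only to $r_n$. $t_1=2$, $t_{n+1}=4t_n+2$ for $n\ge1$. *)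

theory Defs
  imports Main
begin

inductive_set forced :: "'a set \<Rightarrow> ('a \<Rightarrow> 'a \<Rightarrow> bool) \<Rightarrow> 'a set \<Rightarrow> 'a set"
  for V E S where
  init: "x \<in> S \<Longrightarrow> x \<in> forced V E S"
| force: "\<lbrakk> v \<in> forced V E S; v \<in> V; u \<in> V; E v u;
           \<forall>w\<in>V. E v w \<and> w \<noteq> u \<longrightarrow> w \<in> forced V E S \<rbrakk>
          \<Longrightarrow> u \<in> forced V E S"

definition zero_forcing_set :: "'a set \<Rightarrow> ('a \<Rightarrow> 'a \<Rightarrow> bool) \<Rightarrow> 'a set \<Rightarrow> bool" where
  "zero_forcing_set V E S \<longleftrightarrow> S \<subseteq> V \<and> V \<subseteq> forced V E S"

definition Z :: "'a set \<Rightarrow> ('a \<Rightarrow> 'a \<Rightarrow> bool) \<Rightarrow> nat" where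
  "Z V E = (LEAST k. \<exists>S. zero_forcing_set V E S \<and> card S = k)"

text \<open>Labels of the four original vertices a,b,c,e of the subdivided K4
(the subdivision vertex s is identified with the leaf).\<close>
datatype klab = KA | KB | KC | KE

text \<open>Vertices: tree vertices T w (w a binary word, root = []), K4 vertices K w c
attached at leaf w, and the extra vertex Y (= y_n).\<close>
datatype vtx = T "bool list" | K "bool list" klab | Y

text \<open>Depth parameter of the binary tree B_(2n-1): its vertices are words of length < 2n-1.\<close>
definition tree_vertices :: "nat \<Rightarrow> vtx set" where
  "tree_vertices d = {T w | w. length w < d}"

definition VG :: "nat \<Rightarrow> vtx set" where
  "VG n = tree_vertices (2*n - 1) \<union> {K w c | w c. length w = 2*n - 2}"

definition VGh :: "nat \<Rightarrow> vtx set" where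
  "VGh n = VG n \<union> {Y}"

text \<open>Directed version of the edges; the graph adjacency is its symmetrisation.
Subdivided K4 at leaf w: edges s-a, s-b (s = T w) and all pairs among a,b,c,e except a-b.\<close>
definition base_edge :: "nat \<Rightarrow> vtx \<Rightarrow> vtx \<Rightarrow> bool" where
  "base_edge n x y \<longleftrightarrow>
     (\<exists>w b. x = T w \<and> y = T (w @ [b]) \<and> length w + 1 < 2*n - 1) \<or>
     (\<exists>w. length w = 2*n - 2 \<and>
        ((x = T w \<and> y = K w KA) \<or> (x = T w \<and> y = K w KB) \<or>
         (\<exists>c1 c2. x = K w c1 \<and> y = K w c2 \<and> c1 \<noteq> c2 \<and> {c1, c2} \<noteq> {KA, KB})))"

definition EG :: "nat \<Rightarrow> vtx \<Rightarrow> vtx \<Rightarrow> bool" where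
  "EG n x y \<longleftrightarrow> base_edge n x y \<or> base_edge n y x"

definition EGh :: "nat \<Rightarrow> vtx \<Rightarrow> vtx \<Rightarrow> bool" where
  "EGh n x y \<longleftrightarrow> EG n x y \<or> (x = Y \<and> y = T []) \<or> (x = T [] \<and> y = Y)"

fun t :: "nat \<Rightarrow> nat" where
  "t 0 = 0"
| "t (Suc 0) = 2"
| "t (Suc (Suc n)) = 4 * t (Suc n) + 2"

end

theory Submission
  imports Defs
begin


definition kadj :: "klab \<Rightarrow> klab \<Rightarrow> bool" where
  "kadj c1 c2 \<longleftrightarrow> c1 \<noteq> c2 \<and> {c1, c2} \<noteq> {KA, KB}"

lemma kadj_simps[simp]:
  "kadj KA KB = False" "kadj KB KA = False" "kadj KA KC" "kadj KA KE" "kadj KB KC" "kadj KB KE"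
  "kadj KC KA" "kadj KE KA" "kadj KC KB" "kadj KE KB" "kadj KC KE" "kadj KE KC"
  "kadj c c = False"
  by (auto simp: kadj_def doubleton_eq_iff)

lemma EG_sym: "EG n x y = EG n y x" by (auto simp: EG_def)

lemma be_Y[simp]: "base_edge n Y x = False" "base_edge n x Y = False"
  unfolding base_edge_def by auto

lemma EG_Y[simp]: "\<not> EG n Y y" "\<not> EG n y Y"
  by (auto simp: EG_def base_edge_def)

lemma kadj_sym: "kadj c d = kadj d c" by (auto simp: kadj_def insert_commute)

lemma be_KK: "base_edge n (K w c) (K v d) \<longleftrightarrow> w = v \<and> length w = 2*n-2 \<and> kadj c d"
  unfolding base_edge_def kadj_def by auto
lemma be_KT: "base_edge n (K w c) (T v) = False"
  unfolding base_edge_def by auto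
lemma be_TK: "base_edge n (T v) (K w c) \<longleftrightarrow> w = v \<and> length w = 2*n-2 \<and> (c = KA \<or> c = KB)"
  unfolding base_edge_def by auto

lemma EG_K: "EG n (K w c) y \<longleftrightarrow> length w = 2*n-2 \<and> ((y = T w \<and> (c = KA \<or> c = KB)) \<or> (\<exists>c'. y = K w c' \<and> kadj c c'))"
  by (cases y) (simp_all add: EG_def be_KK be_KT be_TK kadj_sym, auto)

lemma EG_T: "EG n (T w) y \<longleftrightarrow> (\<exists>b. y = T (w@[b]) \<and> length w + 1 < 2*n-1) \<or> (w \<noteq> [] \<and> y = T (butlast w) \<and> length w < 2*n-1)
   \<or> (length w = 2*n-2 \<and> (y = K w KA \<or> y = K w KB))"
proof (cases y)
  case (T v)
  have "EG n (T w) (T v) \<longleftrightarrow> (\<exists>b. v = w@[b] \<and> length w + 1 < 2*n-1) \<or> (\<exists>b. w = v@[b] \<and> length v + 1 < 2*n-1)"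
    by (auto simp: EG_def base_edge_def)
  also have "(\<exists>b. w = v@[b] \<and> length v + 1 < 2*n-1) \<longleftrightarrow> (w \<noteq> [] \<and> v = butlast w \<and> length w < 2*n-1)"
  proof
    assume "\<exists>b. w = v@[b] \<and> length v + 1 < 2*n-1" then show "w \<noteq> [] \<and> v = butlast w \<and> length w < 2*n-1" by auto
  next
    assume a: "w \<noteq> [] \<and> v = butlast w \<and> length w < 2*n-1"
    then have "w = v @ [last w]" by simp
    moreover have "length v + 1 < 2*n-1" using a by auto
    ultimately show "\<exists>b. w = v@[b] \<and> length v + 1 < 2*n-1" by blast
  qed
  finally show ?thesis using T by auto
qed (auto simp: EG_def base_edge_def)

fun lab :: "vtx \<Rightarrow> bool list" where
  "lab (T w) = w" | "lab (K w c) = w" | "lab Y = []"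

lemma VG_simps[simp]: "T w \<in> VG n \<longleftrightarrow> length w < 2*n-1" "K w c \<in> VG n \<longleftrightarrow> length w = 2*n-2" "Y \<notin> VG n"
  by (auto simp: VG_def tree_vertices_def)

locale GN = fixes N :: nat assumes N1: "1 \<le> N"
begin

abbreviation "E \<equiv> EG N"
abbreviation "V \<equiv> VG N"
abbreviation "D \<equiv> 2*N-2"

definition Sub :: "bool list \<Rightarrow> vtx set" where "Sub p = {x \<in> V. \<exists>q. lab x = p @ q}"

lemma EG_in: assumes "E x y" shows "x \<in> V" "y \<in> V"
proof -
  have "x \<in> V \<and> y \<in> V"
  proof (cases x)
    case (T w) then show ?thesis using assms N1 by (auto simp: EG_T)
  next
    case (K w c) then show ?thesis using assms N1 by (auto simp: EG_K)
  next
    case Y then show ?thesis using assms by auto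
  qed
  then show "x \<in> V" "y \<in> V" by auto
qed

lemma T_in_Sub: "length p < 2*N-1 \<Longrightarrow> T p \<in> Sub p"
  by (auto simp: Sub_def)

lemma Sub_split: assumes "length p < D"
  shows "Sub p = insert (T p) (Sub (p@[False]) \<union> Sub (p@[True]))"
proof (rule set_eqI)
  fix x
  show "x \<in> Sub p \<longleftrightarrow> x \<in> insert (T p) (Sub (p@[False]) \<union> Sub (p@[True]))"
  proof
    assume "x \<in> Sub p"
    then obtain q where x: "x \<in> V" "lab x = p @ q" by (auto simp: Sub_def)
    show "x \<in> insert (T p) (Sub (p@[False]) \<union> Sub (p@[True]))"
    proof (cases q)
      case Nil
      then show ?thesis using x assms by (cases x) auto
    next
      case (Cons b q')
      then show ?thesis using x by (cases b) (auto simp: Sub_def)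
    qed
  next
    assume "x \<in> insert (T p) (Sub (p@[False]) \<union> Sub (p@[True]))"
    then show "x \<in> Sub p" using assms by (auto simp: Sub_def)
  qed
qed

lemma Sub_leaf: assumes "length p = D"
  shows "Sub p = {T p, K p KA, K p KB, K p KC, K p KE}"
proof (rule set_eqI)
  fix x
  show "x \<in> Sub p \<longleftrightarrow> x \<in> {T p, K p KA, K p KB, K p KC, K p KE}"
  proof
    assume "x \<in> Sub p"
    then obtain q where x: "x \<in> V" "lab x = p @ q" by (auto simp: Sub_def)
    show "x \<in> {T p, K p KA, K p KB, K p KC, K p KE}"
    proof (cases x)
      case (T w) then show ?thesis using x assms N1 by (simp, cases q, auto)
    next
      case (K w c) then show ?thesis using x assms N1 by (simp, cases q, auto, cases c, auto)
    next
      case Y then show ?thesis using x by auto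
    qed
  next
    assume "x \<in> {T p, K p KA, K p KB, K p KC, K p KE}"
    then show "x \<in> Sub p" using assms N1 by (auto simp: Sub_def)
  qed
qed

lemma Sub_disj: "b \<noteq> b' \<Longrightarrow> Sub (p@[b]) \<inter> Sub (p@[b']) = {}"
  by (auto simp: Sub_def)

lemma T_notin_child: "T p \<notin> Sub (p@[b])"
  by (auto simp: Sub_def)

lemma Sub_sub: "Sub (p@[b]) \<subseteq> Sub p"
  by (auto simp: Sub_def)

lemma nb_inner: assumes "v \<in> Sub p" "v \<noteq> T p" "E v x" shows "x \<in> Sub p"
proof -
  obtain q where v: "v \<in> V" "lab v = p @ q" using assms(1) by (auto simp: Sub_def)
  have xV: "x \<in> V" using EG_in(2)[OF assms(3)] .
  show ?thesis
  proof (cases v)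
    case (T w)
    then have q: "q \<noteq> []" "w = p @ q" using v assms(2) by auto
    have "butlast w = p @ butlast q" using q by (simp add: butlast_append)
    then show ?thesis using assms(3) T xV q by (auto simp: EG_T Sub_def)
  next
    case (K w c)
    then show ?thesis using assms(3) v xV by (auto simp: EG_K Sub_def)
  next
    case Y then show ?thesis using v by auto
  qed
qed

lemma nb_root_out: assumes "E (T c) x" "x \<notin> Sub c" shows "c \<noteq> [] \<and> x = T (butlast c)"
  using assms EG_in(2)[OF assms(1)] by (auto simp: EG_T Sub_def)

lemma nb_root_child: assumes "length p < D" "E (T p) x" "x \<in> Sub (p@[b])" shows "x = T (p@[b])"
proof -
  have "butlast p \<noteq> p @ b # q" for q
  proof
    assume "butlast p = p @ b # q"
    then have "length (butlast p) = length (p @ b # q)" by simp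
    then show False by simp
  qed
  then show ?thesis using assms by (auto simp: EG_T Sub_def)
qed

lemma edge_child: "length p < D \<Longrightarrow> E (T p) (T (p@[b]))"
  by (auto simp: EG_T)

lemma nb_child_any: assumes "length p < D" "v \<in> Sub (p@[b])" "E v x" shows "x \<in> Sub (p@[b]) \<or> x = T p"
proof (cases "v = T (p@[b])")
  case True
  then show ?thesis using nb_root_out[of "p@[b]" x] assms by auto
next
  case False
  then show ?thesis using nb_inner assms by blast
qed

end

context GN begin

definition nuniq :: "vtx set \<Rightarrow> vtx \<Rightarrow> bool" where "nuniq F v \<longleftrightarrow> \<not>(\<exists>!x. x \<in> F \<and> E v x)"

lemma nuniq_none: "(\<And>x. x \<in> F \<Longrightarrow> E v x \<Longrightarrow> False) \<Longrightarrow> nuniq F v"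
  by (auto simp: nuniq_def)
lemma nuniq_two: "x \<in> F \<Longrightarrow> y \<in> F \<Longrightarrow> x \<noteq> y \<Longrightarrow> E v x \<Longrightarrow> E v y \<Longrightarrow> nuniq F v"
  by (auto simp: nuniq_def)
lemma nuniq_cong: "(\<And>x. E v x \<Longrightarrow> x \<in> F \<longleftrightarrow> x \<in> G) \<Longrightarrow> nuniq F v = nuniq G v"
  unfolding nuniq_def by metis

definition Cf :: "bool list \<Rightarrow> vtx set \<Rightarrow> vtx set \<Rightarrow> bool" where
  "Cf p S F \<longleftrightarrow> F \<subseteq> Sub p \<and> F \<noteq> {} \<and> F \<inter> S = {} \<and> T p \<notin> F \<and> (\<forall>v\<in>Sub p - F. nuniq F v)"
definition If :: "bool list \<Rightarrow> vtx set \<Rightarrow> vtx set \<Rightarrow> bool" where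
  "If p S F \<longleftrightarrow> F \<subseteq> Sub p \<and> F \<inter> S = {} \<and> T p \<in> F \<and> (\<forall>v\<in>Sub p - F. nuniq F v)"
definition Of :: "bool list \<Rightarrow> vtx set \<Rightarrow> vtx set \<Rightarrow> bool" where
  "Of p S F \<longleftrightarrow> F \<subseteq> Sub p \<and> F \<inter> S = {} \<and> T p \<notin> F \<and> (\<forall>v\<in>Sub p - F - {T p}. nuniq F v)
      \<and> (\<exists>x\<in>F. E (T p) x)"

lemma Sub_cases:
  assumes "length p < D" "v \<in> Sub p"
  obtains "v = T p" | b where "v \<in> Sub (p@[b])"
  using assms Sub_split by blast

lemma lift: assumes "length p < D" "Cf (p@[b]) S F" shows "Cf p S F"
proof -
  from assms have F: "F \<subseteq> Sub (p@[b])" "F \<noteq> {}" "F \<inter> S = {}" "T (p@[b]) \<notin> F"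
    and fo: "\<forall>v\<in>Sub (p@[b]) - F. nuniq F v" by (auto simp: Cf_def)
  have Tp: "T p \<notin> F" using F T_notin_child by blast
  moreover have "F \<subseteq> Sub p" using F Sub_sub by blast
  moreover have "nuniq F v" if v: "v \<in> Sub p - F" for v
  proof -
    consider "v = T p" | b' where "v \<in> Sub (p@[b'])" using v Sub_cases[OF assms(1)] by blast
    then show ?thesis
    proof cases
      case 1 show ?thesis
      proof (rule nuniq_none)
        fix x assume "x \<in> F" "E v x"
        then have "x = T (p@[b])" using nb_root_child[OF assms(1)] 1 F(1) by blast
        then show False using F(4) \<open>x\<in>F\<close> by simp
      qed
    next
      case (2 b')
      show ?thesis
      proof (cases "b' = b")
        case True then show ?thesis using fo v 2 by blast
      next
        case False
        show ?thesis
        proof (rule nuniq_none)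
          fix x assume x: "x \<in> F" "E v x"
          then have "x \<in> Sub (p@[b']) \<or> x = T p" using nb_child_any[OF assms(1) 2] by blast
          then show False using x F(1) Sub_disj[of b' b p] False Tp by auto
        qed
      qed
    qed
  qed
  ultimately show ?thesis using F by (auto simp: Cf_def)
qed

lemma child_mem:
  assumes "\<And>b. Fc b \<subseteq> Sub (p@[b])" "x \<in> Sub (p@[b])"
  shows "x \<in> Fc False \<union> Fc True \<longleftrightarrow> x \<in> Fc b"
proof -
  have "x \<notin> Fc (\<not>b)" using assms(1)[of "\<not>b"] assms(2) Sub_disj[of b "\<not>b" p] by auto
  then show ?thesis by (cases b) auto
qed

lemma U1: assumes "length p < D" "\<And>b. If (p@[b]) S (Fc b)" shows "Cf p S (Fc False \<union> Fc True)"
proof -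
  let ?G = "Fc False \<union> Fc True"
  have F: "\<And>b. Fc b \<subseteq> Sub (p@[b])" "\<And>b. Fc b \<inter> S = {}" "\<And>b. T (p@[b]) \<in> Fc b"
    "\<And>b. \<forall>v\<in>Sub (p@[b]) - Fc b. nuniq (Fc b) v" using assms(2) by (auto simp: If_def)
  have "?G \<subseteq> Sub p" using F(1) Sub_sub by blast
  moreover have "?G \<noteq> {}" using F(3) by blast
  moreover have "?G \<inter> S = {}" using F(2) by blast
  moreover have "T p \<notin> ?G" using F(1) T_notin_child by blast
  moreover have "nuniq ?G v" if v: "v \<in> Sub p - ?G" for v
  proof -
    consider "v = T p" | b where "v \<in> Sub (p@[b])" using v Sub_cases[OF assms(1)] by blast
    then show ?thesis
    proof cases
      case 1
      show ?thesis
        by (rule nuniq_two[of "T (p@[False])" _ "T (p@[True])"])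
           (use F(3) 1 edge_child[OF assms(1)] in auto)
    next
      case (2 b)
      have vF: "v \<notin> Fc b" using v by (cases b) auto
      have "v \<noteq> T (p@[b])" using F(3) vF by metis
      then have "nuniq ?G v = nuniq (Fc b) v"
        using nb_inner[OF 2] child_mem[of Fc p _ b, OF F(1)] by (intro nuniq_cong) blast
      then show ?thesis using F(4) 2 vF by blast
    qed
  qed
  ultimately show ?thesis by (auto simp: Cf_def)
qed

lemma U2: assumes "length p < D" "If (p@[b]) S F" shows "Of p S F"
proof -
  from assms have F: "F \<subseteq> Sub (p@[b])" "F \<inter> S = {}" "T (p@[b]) \<in> F"
    and fo: "\<forall>v\<in>Sub (p@[b]) - F. nuniq F v" by (auto simp: If_def)
  have Tp: "T p \<notin> F" using F T_notin_child by blast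
  moreover have "F \<subseteq> Sub p" using F Sub_sub by blast
  moreover have "\<exists>x\<in>F. E (T p) x" using F(3) edge_child[OF assms(1)] by blast
  moreover have "nuniq F v" if v: "v \<in> Sub p - F - {T p}" for v
  proof -
    obtain b' where b': "v \<in> Sub (p@[b'])" using v Sub_cases[OF assms(1)] by blast
    show ?thesis
    proof (cases "b' = b")
      case True then show ?thesis using fo v b' by blast
    next
      case False
      show ?thesis
      proof (rule nuniq_none)
        fix x assume x: "x \<in> F" "E v x"
        then have "x \<in> Sub (p@[b']) \<or> x = T p" using nb_child_any[OF assms(1) b'] by blast
        then show False using x F(1) Sub_disj[of b' b p] False Tp by auto
      qed
    qed
  qed
  ultimately show ?thesis using F by (auto simp: Of_def)
qed

lemma Xstep: assumes "length p < D" "\<And>b. Of (p@[b]) S (Fc b)" "T p \<notin> S"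
  shows "If p S (insert (T p) (Fc False \<union> Fc True))"
proof -
  let ?G = "insert (T p) (Fc False \<union> Fc True)"
  have F: "\<And>b. Fc b \<subseteq> Sub (p@[b])" "\<And>b. Fc b \<inter> S = {}" "\<And>b. T (p@[b]) \<notin> Fc b"
    "\<And>b. \<forall>v\<in>Sub (p@[b]) - Fc b - {T (p@[b])}. nuniq (Fc b) v"
    "\<And>b. \<exists>x\<in>Fc b. E (T (p@[b])) x" using assms(2) by (auto simp: Of_def)
  have "?G \<subseteq> Sub p" using F(1)[of False] F(1)[of True] Sub_sub[of p False] Sub_sub[of p True]
      T_in_Sub[of p] assms(1) by auto
  moreover have "?G \<inter> S = {}" using F(2) assms(3) by blast
  moreover have "nuniq ?G v" if v: "v \<in> Sub p - ?G" for v
  proof -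
    obtain b where b: "v \<in> Sub (p@[b])" using v Sub_cases[OF assms(1)] by blast
    have vF: "v \<notin> Fc b" using v by (cases b) auto
    show ?thesis
    proof (cases "v = T (p@[b])")
      case True
      obtain x where x: "x \<in> Fc b" "E v x" using F(5)[of b] True by blast
      have "x \<noteq> T p" using x(1) F(1) T_notin_child by blast
      moreover have "E v (T p)" using True edge_child[OF assms(1)] EG_sym by metis
      ultimately show ?thesis using x by (intro nuniq_two[of x _ "T p"]) (cases b; auto)+
    next
      case False
      have "x \<in> ?G \<longleftrightarrow> x \<in> Fc b" if "x \<in> Sub (p@[b])" for x
        using child_mem[of Fc p x b, OF F(1) that] T_notin_child[of p b] that by auto
      then have "nuniq ?G v = nuniq (Fc b) v"
        using nb_inner[OF b False] by (intro nuniq_cong) blast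
      then show ?thesis using F(4) b vF False by blast
    qed
  qed
  ultimately show ?thesis by (auto simp: If_def)
qed

end


lemma klab_UNIV: "(UNIV :: klab set) = {KA, KB, KC, KE}"
  using klab.exhaust by auto

lemma finite_VG: "finite (VG n)"
proof -
  have fl: "finite {w :: bool list. set w \<subseteq> UNIV \<and> length w \<le> 2*n}"
    by (rule finite_lists_length_le) simp
  have "VG n \<subseteq> T ` {w. set w \<subseteq> UNIV \<and> length w \<le> 2*n} \<union>
      (\<lambda>(w,c). K w c) ` ({w. set w \<subseteq> UNIV \<and> length w \<le> 2*n} \<times> UNIV)"
    by (auto simp: VG_def tree_vertices_def)
  moreover have "finite (T ` {w. set w \<subseteq> UNIV \<and> length w \<le> 2*n} \<union>
      (\<lambda>(w,c). K w c) ` ({w. set w \<subseteq> UNIV \<and> length w \<le> 2*n} \<times> (UNIV::klab set)))"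
  proof -
    have "finite (UNIV :: klab set)" unfolding klab_UNIV by simp
    then show ?thesis using fl by (intro finite_UnI finite_imageI finite_cartesian_product)
  qed
  ultimately show ?thesis by (rule finite_subset)
qed

context GN begin

lemma finite_Sub: "finite (Sub p)"
  by (rule finite_subset[OF _ finite_VG]) (auto simp: Sub_def)

lemma EK1: "length p = D \<Longrightarrow> E (K p c) (T p) \<longleftrightarrow> c = KA \<or> c = KB"
  by (auto simp: EG_K)
lemma EK2: "length p = D \<Longrightarrow> E (K p c) (K p d) \<longleftrightarrow> kadj c d"
  by (auto simp: EG_K)
lemma ET: "E (T p) (K p c) \<longleftrightarrow> length p = D \<and> (c = KA \<or> c = KB)"
  by (subst EG_sym) (auto simp: EG_K)

lemma leaf1: assumes "length p = D" "S \<inter> {K p KA, K p KB} = {}" shows "Cf p S {K p KA, K p KB}"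
proof -
  have "nuniq {K p KA, K p KB} v" if "v \<in> Sub p - {K p KA, K p KB}" for v
  proof -
    have "v = T p \<or> v = K p KC \<or> v = K p KE" using that Sub_leaf[OF assms(1)] by auto
    moreover have "nuniq {K p KA, K p KB} (T p)"
    proof (rule nuniq_two[of "K p KA" _ "K p KB"])
      show "E (T p) (K p KA)" "E (T p) (K p KB)" using assms(1) ET by blast+
    qed auto
    moreover have "nuniq {K p KA, K p KB} (K p KC)"
      by (rule nuniq_two[of "K p KA" _ "K p KB"]) (use assms(1) in \<open>auto simp: EK2\<close>)
    moreover have "nuniq {K p KA, K p KB} (K p KE)"
      by (rule nuniq_two[of "K p KA" _ "K p KB"]) (use assms(1) in \<open>auto simp: EK2\<close>)
    ultimately show ?thesis by blast
  qed
  then show ?thesis using assms Sub_leaf[OF assms(1)] by (auto simp: Cf_def)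
qed

lemma leaf2: assumes "length p = D" "S \<inter> {K p KC, K p KE} = {}" shows "Cf p S {K p KC, K p KE}"
proof -
  have "nuniq {K p KC, K p KE} v" if "v \<in> Sub p - {K p KC, K p KE}" for v
  proof -
    have "v = T p \<or> v = K p KA \<or> v = K p KB" using that Sub_leaf[OF assms(1)] by auto
    moreover have "nuniq {K p KC, K p KE} (T p)"
    proof (rule nuniq_none)
      fix y assume "y \<in> {K p KC, K p KE}" "E (T p) y"
      then show False using ET by blast
    qed
    moreover have "nuniq {K p KC, K p KE} (K p KA)"
      by (rule nuniq_two[of "K p KC" _ "K p KE"]) (use assms(1) in \<open>auto simp: EK2\<close>)
    moreover have "nuniq {K p KC, K p KE} (K p KB)"
      by (rule nuniq_two[of "K p KC" _ "K p KE"]) (use assms(1) in \<open>auto simp: EK2\<close>)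
    ultimately show ?thesis by blast
  qed
  then show ?thesis using assms Sub_leaf[OF assms(1)] by (auto simp: Cf_def)
qed

lemma kadj_AC: "x \<in> {KA,KB} \<Longrightarrow> z \<in> {KC,KE} \<Longrightarrow> kadj x z \<and> kadj z x"
  by auto
lemma kadj_CC: "z \<in> {KC,KE} \<Longrightarrow> z' \<in> {KC,KE} \<Longrightarrow> z \<noteq> z' \<Longrightarrow> kadj z z'"
  by auto

lemma leaf3: assumes "length p = D" "x \<in> {KA,KB}" "x' \<in> {KA,KB}" "x \<noteq> x'" "z \<in> {KC,KE}" "z' \<in> {KC,KE}" "z \<noteq> z'"
  "S \<inter> Sub p = {K p x, K p z}"
  shows "If p S {T p, K p x', K p z'}"
proof -
  have all: "c = x \<or> c = x' \<or> c = z \<or> c = z'" for c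
    using assms(2-7) by (cases c) auto
  have "nuniq {T p, K p x', K p z'} v" if vv: "v \<in> Sub p - {T p, K p x', K p z'}" for v
  proof -
    have "v = T p \<or> (\<exists>c. v = K p c)" using vv Sub_leaf[OF assms(1)] by blast
    then obtain c where c: "v = K p c" using vv by blast
    then have "c \<noteq> x'" "c \<noteq> z'" using vv by auto
    then have "c = x \<or> c = z" using all[of c] by blast
    then have "v = K p x \<or> v = K p z" using c by blast
    moreover have "nuniq {T p, K p x', K p z'} (K p x)"
    proof (rule nuniq_two[of "T p" _ "K p z'"])
      show "E (K p x) (T p)" using assms(1,2) EK1 by blast
      show "E (K p x) (K p z')" using assms(1,2,6) EK2 kadj_AC by blast
    qed auto
    moreover have "nuniq {T p, K p x', K p z'} (K p z)"
    proof (rule nuniq_two[of "K p x'" _ "K p z'"])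
      show "E (K p z) (K p x')" using assms(1,3,5) EK2 kadj_AC by blast
      show "E (K p z) (K p z')" using assms(1,5,6,7) EK2 kadj_CC by blast
      show "K p x' \<noteq> K p z'" using assms(3,6) by auto
    qed auto
    ultimately show ?thesis by blast
  qed
  moreover have "{T p, K p x', K p z'} \<subseteq> Sub p" using Sub_leaf[OF assms(1)] assms(3,6) by auto
  moreover have "{T p, K p x', K p z'} \<inter> S = {}"
  proof -
    have "{T p, K p x', K p z'} \<inter> S \<subseteq> S \<inter> Sub p" using calculation(2) by blast
    then show ?thesis using assms(4,7,8) assms(2-7) by auto
  qed
  ultimately show ?thesis by (auto simp: If_def)
qed


end

lemma aux_len: "(x::nat) + 2 * Suc k = 2*N-2 \<Longrightarrow> x < 2*N-2 \<and> x + 1 < 2*N-2 \<and> x + 2 + 2*k = 2*N-2"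
  by simp

context GN begin

lemma card_split: assumes "length q < D"
  shows "card (S \<inter> Sub q) = (if T q \<in> S then 1 else 0) + card (S \<inter> Sub (q@[False])) + card (S \<inter> Sub (q@[True]))"
proof -
  let ?A = "S \<inter> Sub (q@[False])" and ?B = "S \<inter> Sub (q@[True])"
  have fA: "finite ?A" "finite ?B" using finite_Sub by auto
  have cAB: "card (?A \<union> ?B) = card ?A + card ?B"
    using fA Sub_disj[of False True q] by (intro card_Un_disjoint) auto
  have nT: "T q \<notin> ?A \<union> ?B" using T_notin_child by blast
  have eq: "S \<inter> Sub q = (if T q \<in> S then insert (T q) (?A \<union> ?B) else ?A \<union> ?B)"
    using Sub_split[OF assms] by auto
  show ?thesis
  proof (cases "T q \<in> S")
    case True
    then show ?thesis using eq cAB nT fA by (simp add: card_insert_disjoint)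
  next
    case False
    then show ?thesis using eq cAB by simp
  qed
qed

lemma leaf_lb: assumes "length p = D"
  shows "(card (S \<inter> Sub p) \<le> 1 \<longrightarrow> (\<exists>F. Cf p S F)) \<and>
         (card (S \<inter> Sub p) \<le> 2 \<longrightarrow> (\<exists>F. Cf p S F) \<or> (\<exists>F. If p S F))"
proof (cases "S \<inter> {K p KA, K p KB} = {}")
  case True then show ?thesis using leaf1[OF assms True] by blast
next
  case F1: False
  show ?thesis
  proof (cases "S \<inter> {K p KC, K p KE} = {}")
    case True then show ?thesis using leaf2[OF assms True] by blast
  next
    case False
    obtain x where x: "x \<in> {KA,KB}" "K p x \<in> S" using F1 by blast
    obtain z where z: "z \<in> {KC,KE}" "K p z \<in> S" using False by blast
    have sub: "{K p x, K p z} \<subseteq> S \<inter> Sub p" using x z Sub_leaf[OF assms] by auto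
    have c2: "card {K p x, K p z} = 2" using x z by auto
    have ge: "2 \<le> card (S \<inter> Sub p)" using card_mono[OF _ sub] finite_Sub c2 by (metis finite_Int)
    have "card (S \<inter> Sub p) \<le> 2 \<Longrightarrow> \<exists>F. If p S F"
    proof -
      assume "card (S \<inter> Sub p) \<le> 2"
      then have "{K p x, K p z} = S \<inter> Sub p"
        using card_subset_eq[OF _ sub] finite_Sub c2 ge by (metis finite_Int le_antisym)
      then have eq: "S \<inter> Sub p = {K p x, K p z}" by simp
      let ?x' = "if x = KA then KB else KA" and ?z' = "if z = KC then KE else KC"
      have "If p S {T p, K p ?x', K p ?z'}"
        by (rule leaf3[OF assms x(1) _ _ z(1) _ _ eq]) (use x z in auto)
      then show ?thesis by blast
    qed
    then show ?thesis using ge by auto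
  qed
qed

lemma LB: "length p + 2*k = D \<Longrightarrow>
   (card (S \<inter> Sub p) + 1 \<le> t (Suc k) \<longrightarrow> (\<exists>F. Cf p S F)) \<and>
   (card (S \<inter> Sub p) \<le> t (Suc k) \<longrightarrow> (\<exists>F. Cf p S F) \<or> (\<exists>F. If p S F))"
proof (induction k arbitrary: p)
  case 0
  then have "length p = D" by (simp only: mult_0_right add_0_right)
  then show ?case using leaf_lb[of p S] by (simp add: numeral_2_eq_2)
next
  case (Suc k)
  define \<tau> where "\<tau> = t (Suc k)"
  have lp: "length p < D" using aux_len[OF Suc.prems] by blast
  have lu: "length (p@[b]) < D" for b using aux_len[OF Suc.prems] by simp
  have IH: "(card (S \<inter> Sub (p@[b,j])) + 1 \<le> \<tau> \<longrightarrow> (\<exists>F. Cf (p@[b,j]) S F)) \<and>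
   (card (S \<inter> Sub (p@[b,j])) \<le> \<tau> \<longrightarrow> (\<exists>F. Cf (p@[b,j]) S F) \<or> (\<exists>F. If (p@[b,j]) S F))" for b j
  proof -
    have "length (p@[b,j]) + 2*k = D" using aux_len[OF Suc.prems] by simp
    then show ?thesis using Suc.IH[of "p@[b,j]"] by (simp add: \<tau>_def)
  qed
  have lift2: "Cf (p@[b,j]) S F \<Longrightarrow> Cf p S F" for b j F
    using lift[OF lp, of b S F] lift[OF lu[of b], of j S F] by simp
  define g where "g b j = card (S \<inter> Sub (p@[b,j]))" for b j
  define ti where "ti q = (if T q \<in> S then 1 else 0 :: nat)" for q
  have cu: "card (S \<inter> Sub (p@[b])) = ti (p@[b]) + g b False + g b True" for b
    using card_split[OF lu[of b], of S] by (simp add: g_def ti_def)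
  have cp: "card (S \<inter> Sub p) = ti p + card (S \<inter> Sub (p@[False])) + card (S \<inter> Sub (p@[True]))"
    using card_split[OF lp, of S] by (simp add: ti_def)
  have ts: "t (Suc (Suc k)) = 4*\<tau> + 2" by (simp add: \<tau>_def)
  show ?case
  proof (cases "\<exists>b j. g b j + 1 \<le> \<tau>")
    case True
    then obtain b j where "g b j + 1 \<le> \<tau>" by blast
    then obtain F where "Cf (p@[b,j]) S F" using IH[of b j] by (auto simp: g_def)
    then show ?thesis using lift2 by blast
  next
    case False
    have ge: "\<tau> \<le> g b j" for b j
    proof -
      have "\<not> (g b j + 1 \<le> \<tau>)" using False by blast
      then show ?thesis by linarith
    qed
    show ?thesis
    proof (cases "\<exists>b. g b False \<le> \<tau> \<and> g b True \<le> \<tau>")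
      case True
      then obtain b where b: "g b False \<le> \<tau>" "g b True \<le> \<tau>" by blast
      have "(\<exists>F. Cf (p@[b,j]) S F) \<or> (\<exists>F. If (p@[b,j]) S F)" for j
        using IH[of b j] b by (cases j) (auto simp: g_def)
      then consider j F where "Cf (p@[b,j]) S F" | "\<forall>j. \<exists>F. If (p@[b,j]) S F" by blast
      then have "\<exists>F. Cf p S F"
      proof cases
        case 1 then show ?thesis using lift2 by blast
      next
        case 2
        obtain Fc where Fc0: "\<forall>j. If (p@[b,j]) S (Fc j)" using choice[OF 2] by blast
        then have Fc: "\<And>j. If (p@[b,j]) S (Fc j)" by blast
        have "Cf (p@[b]) S (Fc False \<union> Fc True)"
          by (rule U1[OF lu[of b]]) (use Fc in simp)
        then show ?thesis using lift[OF lp] by blast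
      qed
      then show ?thesis by blast
    next
      case False
      have big: "\<tau> < g b False \<or> \<tau> < g b True" for b
      proof -
        have "\<not> (g b False \<le> \<tau> \<and> g b True \<le> \<tau>)" using False by blast
        then show ?thesis by linarith
      qed
      have low: "2*\<tau> + 1 \<le> g b False + g b True" for b using big[of b] ge[of b False] ge[of b True] by linarith
      have tot: "card (S \<inter> Sub p) = ti p + ti (p@[False]) + ti (p@[True]) + (g False False + g False True) + (g True False + g True True)"
        using cp cu[of False] cu[of True] by simp
      have "card (S \<inter> Sub p) \<le> 4*\<tau>+2 \<Longrightarrow> \<exists>F. If p S F \<or> Cf p S F"
      proof -
        assume a: "card (S \<inter> Sub p) \<le> 4*\<tau>+2"
        have tp: "ti p = 0" using a tot low[of False] low[of True] by linarith
        then have Tp: "T p \<notin> S" by (simp add: ti_def split: if_splits)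
        have each: "\<exists>j. g b j \<le> \<tau>" for b
        proof -
          have "g False False + g False True \<le> 2*\<tau>+1" "g True False + g True True \<le> 2*\<tau>+1"
            using a tot low[of False] low[of True] by linarith+
          then have "g b False + g b True \<le> 2*\<tau>+1" by (cases b) auto
          show ?thesis
          proof (rule ccontr)
            assume "\<not> ?thesis"
            then have "\<tau> < g b False" "\<tau> < g b True" using not_le by blast+
            then show False using \<open>g b False + g b True \<le> 2*\<tau>+1\<close> by linarith
          qed
        qed
        have "(\<exists>F. Cf p S F) \<or> (\<exists>F. Of (p@[b]) S F)" for b
        proof -
          obtain j where j: "g b j \<le> \<tau>" using each by blast
          then have "(\<exists>F. Cf (p@[b,j]) S F) \<or> (\<exists>F. If (p@[b,j]) S F)" using IH[of b j] by (simp add: g_def)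
          then show ?thesis
          proof
            assume "\<exists>F. Cf (p@[b,j]) S F" then show ?thesis using lift2 by blast
          next
            assume "\<exists>F. If (p@[b,j]) S F"
            then obtain F where "If ((p@[b])@[j]) S F" by auto
            then show ?thesis using U2[OF lu[of b]] by blast
          qed
        qed
        then consider "\<exists>F. Cf p S F" | "\<forall>b. \<exists>F. Of (p@[b]) S F" by blast
        then show ?thesis
        proof cases
          case 1 then show ?thesis by blast
        next
          case 2
          obtain Fc where "\<forall>b. Of (p@[b]) S (Fc b)" using choice[OF 2] by blast
          then show ?thesis using Xstep[OF lp _ Tp, where Fc=Fc] by blast
        qed
      qed
      moreover have "\<not> (card (S \<inter> Sub p) + 1 \<le> t (Suc (Suc k)))"
        using tot low[of False] low[of True] ts by linarith
      ultimately show ?thesis using ts by auto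
    qed
  qed
qed

end


lemma fort_blocks:
  assumes "F \<subseteq> V" "F \<noteq> {}" "F \<inter> S = {}" "\<forall>v\<in>V - F. \<not>(\<exists>!x. x\<in>F \<and> E v x)"
  shows "\<not> zero_forcing_set V E S"
proof
  have nf: "x \<notin> F" if "x \<in> forced V E S" for x
    using that
  proof (induction rule: forced.induct)
    case (init x) then show ?case using assms(3) by blast
  next
    case (force v u)
    show ?case
    proof
      assume uF: "u \<in> F"
      have "\<exists>!x. x\<in>F \<and> E v x"
      proof (rule ex1I[of _ u])
        show "u \<in> F \<and> E v u" using uF force by blast
        fix x assume x: "x \<in> F \<and> E v x"
        show "x = u"
        proof (rule ccontr)
          assume "x \<noteq> u"
          then have "x \<in> forced V E S \<and> x \<notin> F" using force x assms(1) by blast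
          then show False using x by blast
        qed
      qed
      then show False using assms(4) force by blast
    qed
  qed
  assume "zero_forcing_set V E S"
  then have "V \<subseteq> forced V E S" by (simp add: zero_forcing_set_def)
  then show False using assms(1,2) nf by blast
qed


fun Aset :: "nat \<Rightarrow> bool list \<Rightarrow> vtx set" where
  "Aset 0 p = {K p KA, K p KC}"
| "Aset (Suc k) p = (Aset k (p@[False,False]) \<union> insert (T (p@[False,True])) (Aset k (p@[False,True])))
     \<union> (Aset k (p@[True,False]) \<union> insert (T (p@[True,True])) (Aset k (p@[True,True])))"

definition Pre :: "bool list \<Rightarrow> vtx set" where "Pre q = {x. x \<noteq> Y \<and> (\<exists>r. lab x = q @ r)}"

lemma Pre_disj: "b \<noteq> b' \<Longrightarrow> Pre (q@[b]) \<inter> Pre (q@[b']) = {}"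
  by (auto simp: Pre_def)

lemma Pre_mono: "Pre (q@r) \<subseteq> Pre q"
  by (auto simp: Pre_def)

lemma Aset_props: "finite (Aset k p) \<and> Aset k p \<subseteq> Pre p \<and> T p \<notin> Aset k p \<and> card (Aset k p) = t (Suc k)"
proof (induction k arbitrary: p)
  case 0 then show ?case by (auto simp: Pre_def)
next
  case (Suc k)
  define B where "B b = Aset k (p@[b,False]) \<union> insert (T (p@[b,True])) (Aset k (p@[b,True]))" for b
  have eq: "Aset (Suc k) p = B False \<union> B True" by (simp add: B_def)
  have B: "finite (B b) \<and> B b \<subseteq> Pre (p@[b]) \<and> T p \<notin> B b \<and> card (B b) = 2 * t (Suc k) + 1" for b
  proof -
    have h0: "finite (Aset k (p@[b,False]))" "Aset k (p@[b,False]) \<subseteq> Pre ((p@[b])@[False])"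
      "card (Aset k (p@[b,False])) = t (Suc k)" using Suc.IH[of "p@[b,False]"] by auto
    have h1: "finite (Aset k (p@[b,True]))" "Aset k (p@[b,True]) \<subseteq> Pre ((p@[b])@[True])"
      "card (Aset k (p@[b,True])) = t (Suc k)" "T (p@[b,True]) \<notin> Aset k (p@[b,True])"
      using Suc.IH[of "p@[b,True]"] by auto
    have tin: "T (p@[b,True]) \<in> Pre ((p@[b])@[True])" by (auto simp: Pre_def)
    have c1: "card (insert (T (p@[b,True])) (Aset k (p@[b,True]))) = t (Suc k) + 1"
      using h1 by simp
    have dj: "Aset k (p@[b,False]) \<inter> insert (T (p@[b,True])) (Aset k (p@[b,True])) = {}"
      using h0(2) h1(2) tin Pre_disj[of False True "p@[b]"] by blast
    have "card (B b) = 2 * t (Suc k) + 1"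
      unfolding B_def using card_Un_disjoint[OF h0(1) _ dj] h1(1) c1 h0(3) by simp
    moreover have "B b \<subseteq> Pre (p@[b])"
      unfolding B_def using h0(2) h1(2) tin Pre_mono[of "p@[b]" "[False]"] Pre_mono[of "p@[b]" "[True]"] by blast
    moreover have "T p \<notin> Pre (p@[b])" by (auto simp: Pre_def)
    ultimately show ?thesis unfolding B_def using h0(1) h1(1) by blast
  qed
  have dj: "B False \<inter> B True = {}" using B[of False] B[of True] Pre_disj[of False True p] by blast
  have "card (Aset (Suc k) p) = 4 * t (Suc k) + 2"
    unfolding eq using card_Un_disjoint[OF _ _ dj] B[of False] B[of True] by simp
  moreover have "Aset (Suc k) p \<subseteq> Pre p" unfolding eq
    using B[of False] B[of True] Pre_mono[of p "[False]"] Pre_mono[of p "[True]"] by blast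
  moreover have "finite (Aset (Suc k) p)" unfolding eq using B[of False] B[of True] by (simp del: Aset.simps)
  moreover have "T p \<notin> Aset (Suc k) p" unfolding eq using B[of False] B[of True] by blast
  moreover have "t (Suc (Suc k)) = 4 * t (Suc k) + 2" by simp
  ultimately show ?case by (simp del: Aset.simps)
qed

context GN begin

lemma butlast_neq: "w \<noteq> [] \<Longrightarrow> w \<noteq> butlast w"
proof
  assume "w \<noteq> []" "w = butlast w"
  then have "length w = length w - 1" by (metis length_butlast)
  then show False using \<open>w \<noteq> []\<close> by (cases w) auto
qed

lemma E_irrefl: "\<not> E x x"
  using butlast_neq by (cases x) (auto simp: EG_T EG_K)

lemma Aset_sub: "length p + 2*k = D \<Longrightarrow> Aset k p \<subseteq> Sub p"
proof (induction k arbitrary: p)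
  case 0
  then have "length p = D" by (simp only: mult_0_right add_0_right)
  then show ?case using Sub_leaf[of p] by simp
next
  case (Suc k)
  have lu: "length (p@[b]) < D" for b using aux_len[OF Suc.prems] by simp
  have l2: "length (p@[b,j]) + 2*k = D" for b j using aux_len[OF Suc.prems] by simp
  have s2: "Sub (p@[b,j]) \<subseteq> Sub p" for b j using Sub_sub[of "p@[b]" j] Sub_sub[of p b] by auto
  have "Aset k (p@[b,j]) \<subseteq> Sub p" for b j using Suc.IH[OF l2] s2 by blast
  moreover have "T (p@[b,True]) \<in> Sub p" for b
    using T_in_Sub[of "p@[b,True]"] lu[of b] s2[of b True] by auto
  ultimately show ?case by auto
qed

lemma Sub_Nil: "Sub [] = V" by (auto simp: Sub_def)

end


lemma kadj_KA: "kadj KA c \<longleftrightarrow> c = KC \<or> c = KE" by (cases c) auto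
lemma kadj_KC: "kadj KC c \<longleftrightarrow> c = KA \<or> c = KB \<or> c = KE" by (cases c) auto

context GN begin

lemma UB:
  assumes VV: "V \<subseteq> V'" and EE: "\<And>v w. v \<in> V \<Longrightarrow> v \<noteq> T [] \<Longrightarrow> E' v w \<longleftrightarrow> E v w"
  shows "length p + 2*k = D \<Longrightarrow> Aset k p \<subseteq> S \<Longrightarrow> T p \<in> forced V' E' S \<Longrightarrow> Sub p \<subseteq> forced V' E' S"
proof (induction k arbitrary: p)
  have fs: "u \<in> forced V' E' S"
    if "v \<in> forced V' E' S" "v \<in> V" "v \<noteq> T []" "u \<in> V" "E v u" "\<And>w. E v w \<Longrightarrow> w \<noteq> u \<Longrightarrow> w \<in> forced V' E' S"
    for v u
  proof (rule forced.force[of v])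
    show "v \<in> forced V' E' S" "v \<in> V'" "u \<in> V'" using that VV by auto
    show "E' v u" using EE that by blast
    show "\<forall>w\<in>V'. E' v w \<and> w \<noteq> u \<longrightarrow> w \<in> forced V' E' S" using EE that by blast
  qed
  {
    case 0
    then have lp: "length p = D" by (simp only: mult_0_right add_0_right)
    have inS: "K p KA \<in> forced V' E' S" "K p KC \<in> forced V' E' S"
      using 0 by (auto intro: forced.init)
    have KE: "K p KE \<in> forced V' E' S"
    proof (rule fs[OF inS(1)])
      show "K p KA \<in> V" "K p KE \<in> V" using lp by auto
      show "K p KA \<noteq> T []" by simp
      show "E (K p KA) (K p KE)" using lp by (simp add: EG_K)
      fix w assume "E (K p KA) w" "w \<noteq> K p KE"
      then have "w = T p \<or> w = K p KC" by (auto simp: EG_K kadj_KA)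
      then show "w \<in> forced V' E' S" using inS 0 by blast
    qed
    have KB: "K p KB \<in> forced V' E' S"
    proof (rule fs[OF inS(2)])
      show "K p KC \<in> V" "K p KB \<in> V" using lp by auto
      show "K p KC \<noteq> T []" by simp
      show "E (K p KC) (K p KB)" using lp by (simp add: EG_K)
      fix w assume "E (K p KC) w" "w \<noteq> K p KB"
      then have "w = K p KA \<or> w = K p KE" by (auto simp: EG_K kadj_KC)
      then show "w \<in> forced V' E' S" using inS KE by blast
    qed
    show ?case using Sub_leaf[OF lp] inS KE KB 0 by auto
  next
    case (Suc k)
    have lp: "length p < D" using aux_len[OF Suc.prems(1)] by blast
    have lu: "length (p@[b]) < D" for b using aux_len[OF Suc.prems(1)] by simp
    have l2: "length (p@[b,j]) + 2*k = D" for b j using aux_len[OF Suc.prems(1)] by simp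
    have A: "Aset k (p@[b,j]) \<subseteq> S" "T (p@[b,True]) \<in> S" for b j
      using Suc.prems(2) by (cases b; cases j; auto)+
    have sub_u: "Sub (p@[b]) \<subseteq> forced V' E' S" for b
    proof -
      have T1: "T (p@[b,True]) \<in> forced V' E' S" using A(2) by (rule forced.init)
      have S1: "Sub (p@[b,True]) \<subseteq> forced V' E' S" using Suc.IH[OF l2 A(1) T1] .
      have Tu: "T (p@[b]) \<in> forced V' E' S"
      proof (rule fs[OF T1])
        show "T (p@[b,True]) \<in> V" "T (p@[b]) \<in> V" using lu[of b] by auto
        show "T (p@[b,True]) \<noteq> T []" by simp
        show "E (T (p@[b,True])) (T (p@[b]))" using edge_child[OF lu[of b], of True] EG_sym by simp
        fix w assume w: "E (T (p@[b,True])) w" "w \<noteq> T (p@[b])"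
        show "w \<in> forced V' E' S"
        proof (cases "w \<in> Sub (p@[b,True])")
          case True then show ?thesis using S1 by blast
        next
          case False
          then have "w = T (butlast (p@[b,True]))" using nb_root_out[OF w(1)] by blast
          then show ?thesis using w(2) by (simp add: butlast_append)
        qed
      qed
      have T0: "T (p@[b,False]) \<in> forced V' E' S"
      proof (rule fs[OF Tu])
        show "T (p@[b]) \<in> V" "T (p@[b,False]) \<in> V" using lu[of b] by auto
        show "T (p@[b]) \<noteq> T []" by simp
        show "E (T (p@[b])) (T (p@[b,False]))" using edge_child[OF lu[of b], of False] by simp
        fix w assume w: "E (T (p@[b])) w" "w \<noteq> T (p@[b,False])"
        show "w \<in> forced V' E' S"
        proof (cases "w \<in> Sub (p@[b])")
          case True
          then consider "w = T (p@[b])" | j where "w \<in> Sub ((p@[b])@[j])"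
            using Sub_cases[OF lu[of b]] by blast
          then show ?thesis
          proof cases
            case 1 then show ?thesis using w(1) E_irrefl by simp
          next
            case (2 j)
            then have "w = T ((p@[b])@[j])" using nb_root_child[OF lu[of b] w(1)] by blast
            then have "w = T (p@[b,True])" using w(2) by (cases j) auto
            then show ?thesis using T1 by simp
          qed
        next
          case False
          then have "w = T (butlast (p@[b]))" using nb_root_out[OF w(1)] by blast
          then show ?thesis using Suc.prems(3) by simp
        qed
      qed
      have S0: "Sub (p@[b,False]) \<subseteq> forced V' E' S" using Suc.IH[OF l2 A(1) T0] .
      show ?thesis using Sub_split[OF lu[of b]] S0 S1 Tu by auto
    qed
    show ?case using Sub_split[OF lp] sub_u Suc.prems(3) by auto
  }
qed


lemma hlen: "length ([]::bool list) + 2*(N-1) = D" using N1 by simp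
lemma tN: "t (Suc (N-1)) = t N" using N1 by simp

definition A0 where "A0 = Aset (N-1) []"

lemma A0_props: "finite A0" "card A0 = t N" "T [] \<notin> A0" "A0 \<subseteq> V"
  using Aset_props[of "N-1" "[]"] tN Aset_sub[OF hlen] Sub_Nil by (auto simp: A0_def)

lemma ub_G: "zero_forcing_set V E (insert (T []) A0) \<and> card (insert (T []) A0) = t N + 1"
proof -
  let ?S = "insert (T []) A0"
  have T0: "T [] \<in> forced V E ?S" by (rule forced.init) simp
  have "Sub [] \<subseteq> forced V E ?S"
    by (rule UB[of V E, OF _ _ hlen]) (use T0 in \<open>auto simp: A0_def\<close>)
  moreover have "?S \<subseteq> V" using A0_props N1 by auto
  ultimately show ?thesis using A0_props by (simp add: zero_forcing_set_def Sub_Nil)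
qed

lemma EGh_Y: "EGh N Y w \<longleftrightarrow> w = T []" by (auto simp: EGh_def)
lemma EGh_V: "v \<noteq> Y \<Longrightarrow> x \<noteq> Y \<Longrightarrow> EGh N v x \<longleftrightarrow> E v x" by (auto simp: EGh_def)
lemma EGh_V2: "v \<noteq> T [] \<Longrightarrow> v \<noteq> Y \<Longrightarrow> EGh N v x \<longleftrightarrow> E v x" by (auto simp: EGh_def)

lemma ub_H: "zero_forcing_set (VGh N) (EGh N) (insert Y A0) \<and> card (insert Y A0) = t N + 1"
proof -
  let ?S = "insert Y A0"
  have Y0: "Y \<in> forced (VGh N) (EGh N) ?S" by (rule forced.init) simp
  have T0: "T [] \<in> forced (VGh N) (EGh N) ?S"
  proof (rule forced.force[OF Y0])
    show "Y \<in> VGh N" "T [] \<in> VGh N" using N1 by (auto simp: VGh_def)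
    show "EGh N Y (T [])" by (simp add: EGh_Y)
    show "\<forall>w\<in>VGh N. EGh N Y w \<and> w \<noteq> T [] \<longrightarrow> w \<in> forced (VGh N) (EGh N) ?S"
      by (simp add: EGh_Y)
  qed
  have "Sub [] \<subseteq> forced (VGh N) (EGh N) ?S"
  proof (rule UB[of "VGh N" "EGh N", OF _ _ hlen])
    show "V \<subseteq> VGh N" by (auto simp: VGh_def)
    show "EGh N v w = E v w" if "v \<in> V" "v \<noteq> T []" for v w
    proof -
      have "v \<noteq> Y" using that(1) by auto
      then show ?thesis using EGh_V2[OF that(2)] by blast
    qed
  qed (use T0 in \<open>auto simp: A0_def\<close>)
  moreover have "?S \<subseteq> VGh N" using A0_props by (auto simp: VGh_def)
  moreover have "Y \<in> forced (VGh N) (EGh N) ?S" by (rule Y0)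
  moreover have "Y \<notin> A0" using A0_props by auto
  ultimately show ?thesis using A0_props by (auto simp: zero_forcing_set_def Sub_Nil VGh_def)
qed

lemma LB0: "(card (S \<inter> V) + 1 \<le> t N \<longrightarrow> (\<exists>F. Cf [] S F)) \<and>
   (card (S \<inter> V) \<le> t N \<longrightarrow> (\<exists>F. Cf [] S F) \<or> (\<exists>F. If [] S F))"
  using LB[OF hlen, of S] tN Sub_Nil by simp

lemma lb_G: assumes "zero_forcing_set V E S" shows "t N + 1 \<le> card S"
proof (rule ccontr)
  assume "\<not> ?thesis"
  then have c: "card S \<le> t N" by simp
  have SV: "S \<subseteq> V" using assms by (simp add: zero_forcing_set_def)
  have "finite S" using finite_subset[OF SV finite_VG] .
  then have "card (S \<inter> V) \<le> t N" using c card_mono[of S "S \<inter> V"] by auto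
  then obtain F where "Cf [] S F \<or> If [] S F" using LB0 by blast
  then have "F \<subseteq> V \<and> F \<noteq> {} \<and> F \<inter> S = {} \<and> (\<forall>v\<in>V - F. nuniq F v)"
    by (auto simp: Cf_def If_def Sub_Nil)
  then have "\<not> zero_forcing_set V E S" by (intro fort_blocks[of F]) (auto simp: nuniq_def)
  then show False using assms by simp
qed

lemma transfer: "(\<And>x. (x \<in> F' \<and> EGh N v x) \<longleftrightarrow> (x \<in> F \<and> E v x)) \<Longrightarrow> nuniq F v \<Longrightarrow> \<not>(\<exists>!x. x\<in>F' \<and> EGh N v x)"
  by (simp add: nuniq_def)

lemma fortH_C: assumes "Cf [] S F" shows "\<not> zero_forcing_set (VGh N) (EGh N) S"
proof -
  have F: "F \<subseteq> V" "F \<noteq> {}" "F \<inter> S = {}" "T [] \<notin> F" "\<forall>v\<in>V - F. nuniq F v"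
    using assms by (auto simp: Cf_def Sub_Nil)
  show ?thesis
  proof (rule fort_blocks)
    show "F \<subseteq> VGh N" using F by (auto simp: VGh_def)
    show "\<forall>v\<in>VGh N - F. \<not>(\<exists>!x. x\<in>F \<and> EGh N v x)"
    proof
      fix v assume v: "v \<in> VGh N - F"
      show "\<not>(\<exists>!x. x\<in>F \<and> EGh N v x)"
      proof (cases "v = Y")
        case True then show ?thesis using F(4) by (auto simp: EGh_Y)
      next
        case False
        then have "v \<in> V - F" using v by (auto simp: VGh_def)
        moreover have "(x \<in> F \<and> EGh N v x) \<longleftrightarrow> (x \<in> F \<and> E v x)" for x
        proof -
          have "x \<in> F \<Longrightarrow> x \<noteq> Y" using F(1) VG_simps(3)[of N] by blast
          then show ?thesis using EGh_V[OF False, of x] by blast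
        qed
        ultimately show ?thesis using F(5) transfer by blast
      qed
    qed
  qed (use F in auto)
qed

lemma fortH_I: assumes "If [] S F" "Y \<notin> S" shows "\<not> zero_forcing_set (VGh N) (EGh N) S"
proof -
  have F: "F \<subseteq> V" "F \<inter> S = {}" "T [] \<in> F" "\<forall>v\<in>V - F. nuniq F v"
    using assms by (auto simp: If_def Sub_Nil)
  show ?thesis
  proof (rule fort_blocks[of "insert Y F"])
    show "insert Y F \<subseteq> VGh N" using F by (auto simp: VGh_def)
    show "insert Y F \<inter> S = {}" using F assms(2) by auto
    show "\<forall>v\<in>VGh N - insert Y F. \<not>(\<exists>!x. x\<in>insert Y F \<and> EGh N v x)"
    proof
      fix v assume v: "v \<in> VGh N - insert Y F"
      then have vV: "v \<in> V - F" "v \<noteq> Y" "v \<noteq> T []" using F(3) by (auto simp: VGh_def)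
      have "(x \<in> insert Y F \<and> EGh N v x) \<longleftrightarrow> (x \<in> F \<and> E v x)" for x
        using EGh_V2[OF vV(3) vV(2), of x] by auto
      then show "\<not>(\<exists>!x. x\<in>insert Y F \<and> EGh N v x)"
        by (intro transfer[of "insert Y F" v F]) (use F(4) vV(1) in auto)
    qed
  qed simp
qed

lemma lb_H: assumes "zero_forcing_set (VGh N) (EGh N) S" shows "t N + 1 \<le> card S"
proof (rule ccontr)
  assume "\<not> ?thesis"
  then have c: "card S \<le> t N" by simp
  have SV: "S \<subseteq> VGh N" using assms by (simp add: zero_forcing_set_def)
  have fin: "finite S" using finite_subset[OF SV] finite_VG by (auto simp: VGh_def)
  show False
  proof (cases "Y \<in> S")
    case True
    have "S \<inter> V \<subseteq> S - {Y}" by auto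
    then have "card (S \<inter> V) \<le> card (S - {Y})" using fin by (intro card_mono) auto
    moreover have "card (S - {Y}) + 1 = card S" using True fin
      by (metis card_Diff_singleton card.remove Suc_eq_plus1)
    ultimately have "card (S \<inter> V) + 1 \<le> t N" using c by linarith
    then obtain F where "Cf [] S F" using LB0 by blast
    then show False using fortH_C assms by blast
  next
    case False
    have "card (S \<inter> V) \<le> t N" using c card_mono[of S "S \<inter> V"] fin by auto
    then obtain F where "Cf [] S F \<or> If [] S F" using LB0 by blast
    then show False using fortH_C fortH_I[OF _ False] assms by blast
  qed
qed

end

lemma Z_eq: assumes "zero_forcing_set V E S0" "card S0 = m" "\<And>S. zero_forcing_set V E S \<Longrightarrow> m \<le> card S"
  shows "Z V E = m"
  unfolding Z_def
proof (rule Least_equality)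
  show "\<exists>S. zero_forcing_set V E S \<and> card S = m" using assms by blast
  fix y assume "\<exists>S. zero_forcing_set V E S \<and> card S = y"
  then show "m \<le> y" using assms(3) by blast
qed

theorem proposition1:
  fixes n :: nat
  assumes "n \<ge> 1"
  shows "Z (VG n) (EG n) = t n + 1 \<and> Z (VGh n) (EGh n) = t n + 1"
proof -
  interpret GN n using assms by unfold_locales
  show ?thesis
  proof
    show "Z (VG n) (EG n) = t n + 1"
      using ub_G lb_G by (intro Z_eq) blast+
    show "Z (VGh n) (EGh n) = t n + 1"
      using ub_H lb_H by (intro Z_eq) blast+
  qed
qed


end
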